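(* Let $\mathbb{K}$ be a field of characteristic $2$, let $(A,\cdot,\{-,-\},(-)^{\{2\}})$ be a restricted Poisson algebra, let $k\ge1$ and let $(A^t_k,\cdot,\mu_{(k)},\omega_{(k)})$ be a formal deformation of order $k$ of $A$, with $\mu_{(k)}=\{-,-\}+\sum_{i=1}^kt^i\mu_i$ and $\omega_{(k)}=(-)^{\{2\}}+\sum_{i=1}^kt^i\omega_i$. Define, for $x,y,z\in A$, $\mathrm{obs}^{(1)}_{k+1}(x,y,z)=\sum_{i=1}^k\big(\mu_i(x,\mu_{k+1-i}(y,z))+\mu_i(y,\mu_{k+1-i}(z,x))+\mu_i(z,\mu_{k+1-i}(x,y))\big)$ and $\mathrm{obs}^{(2)}_{k+1}(x,y)=\sum_{i=1}^k\big(\mu_i(y,\omega_{k+1-i}(x))+\mu_i(x,\mu_{k+1-i}(x,y))\big)$. Then $(\mathrm{obs}^{(1)}_{k+1},\mathrm{obs}^{(2)}_{k+1})\in C^3_{\rm PA}(A)$.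
   Context: $\mathbb{K}$ has characteristic $2$. Restricted Poisson algebra: commutative associative $(A,\cdot)$ with Lie bracket satisfying $\{ab,c\}=a\{b,c\}+b\{a,c\}$, and a map $(-)^{\{2\}}$ with $(\lambda x)^{\{2\}}=\lambda^2x^{\{2\}}$, $\mathrm{ad}_{x^{\{2\}}}=\mathrm{ad}_x^2$, $(x+y)^{\{2\}}=x^{\{2\}}+y^{\{2\}}+\{x,y\}$, $(xy)^{\{2\}}=x^2y^{\{2\}}+y^2x^{\{2\}}+xy\{x,y\}$. $\mathfrak{X}^n(A)$: alternating $n$-linear maps $A^n\to A$ that are derivations of $\cdot$ in each argument. For $n\ge2$, $C^n_{\rm PA}(A)$: pairs $(\varphi,\omega)$ with $\varphi\in\mathfrak{X}^n(A)$ and $\omega:A\times A^{n-2}\to A$ alternating multilinear in the last $n-2$ arguments, such that for $z=(z_2,..,z_{n-1})$: $\omega(\lambda x,z)=\lambda^2\omega(x,z)$, $\omega(x+y,z)=\omega(x,z)+\omega(y,z)+\varphi(x,y,z)$, $\omega(xy,z)=x^2\omega(y,z)+y^2\omega(x,z)+xy\varphi(x,y,z)$, $\omega(x,..,z_iz_i',..)=z_i\omega(x,..,z_i',..)+z_i'\omega(x,..,z_i,..)$. (For $n=2$, $\omega:A\to A$.) $\mathbb{K}^t_k=\mathbb{K}[t]/(t^{k+1})$, $A^t_k=A\otimes\mathbb{K}^t_k$. A formal deformation of order $k$: all $(\mu_i,\omega_i)\in C^2_{\rm PA}(A)$ and $(A^t_k,\mu_{(k)},\omega_{(k)})$ is a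 restricted Lie algebra over $\mathbb{K}^t_k$ ($\mu$ extended bilinearly, $\omega$ extended by $\omega(\lambda X)=\lambda^2\omega(X)$, $\omega(X+Y)=\omega(X)+\omega(Y)+\mu(X,Y)$). *)

theory Defs
  imports Main "HOL.Vector_Spaces"
begin

text \<open>The algebra A is a type 'a with a commutative associative multiplication
(class comm_ring, not necessarily unital) and a K-vector space structure given by
the scalar multiplication s, compatible with the multiplication.\<close>

definition comm_algebra :: "('k::field \<Rightarrow> 'a::comm_ring \<Rightarrow> 'a) \<Rightarrow> bool" where
  "comm_algebra s \<longleftrightarrow> vector_space s \<and> (\<forall>c x y. s c (x * y) = s c x * y)"

definition restricted_poisson ::
  "('k::field \<Rightarrow> 'a::comm_ring \<Rightarrow> 'a) \<Rightarrow> ('a \<Rightarrow> 'a \<Rightarrow> 'a) \<Rightarrow> ('a \<Rightarrow> 'a) \<Rightarrow> bool" where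
  "restricted_poisson s br sq \<longleftrightarrow>
     comm_algebra s \<and>
     \<comment> \<open>Lie bracket: bilinear, alternating, Jacobi\<close>
     (\<forall>c x y z. br (s c x + y) z = s c (br x z) + br y z) \<and>
     (\<forall>c x y z. br z (s c x + y) = s c (br z x) + br z y) \<and>
     (\<forall>x. br x x = 0) \<and>
     (\<forall>x y z. br x (br y z) + br y (br z x) + br z (br x y) = 0) \<and>
     \<comment> \<open>Leibniz rule\<close>
     (\<forall>a b c. br (a * b) c = a * br b c + b * br a c) \<and>
     \<comment> \<open>restriction map\<close>
     (\<forall>c x. sq (s c x) = s (c^2) (sq x)) \<and>
     (\<forall>x y. br (sq x) y = br x (br x y)) \<and>
     (\<forall>x y. sq (x + y) = sq x + sq y + br x y) \<and>
     (\<forall>x y. sq (x * y) = x * x * sq y + y * y * sq x + x * y * br x y)"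

definition C2_PA ::
  "('k::field \<Rightarrow> 'a::comm_ring \<Rightarrow> 'a) \<Rightarrow> ('a \<Rightarrow> 'a \<Rightarrow> 'a) \<Rightarrow> ('a \<Rightarrow> 'a) \<Rightarrow> bool" where
  "C2_PA s \<phi> \<omega> \<longleftrightarrow>
     \<comment> \<open>\<phi> \<in> X^2(A): alternating, multilinear, derivation in each argument\<close>
     (\<forall>c x y z. \<phi> (s c x + y) z = s c (\<phi> x z) + \<phi> y z) \<and>
     (\<forall>c x y z. \<phi> z (s c x + y) = s c (\<phi> z x) + \<phi> z y) \<and>
     (\<forall>x. \<phi> x x = 0) \<and>
     (\<forall>a b c. \<phi> (a * b) c = a * \<phi> b c + b * \<phi> a c) \<and>
     (\<forall>a b c. \<phi> c (a * b) = a * \<phi> c b + b * \<phi> c a) \<and>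
     \<comment> \<open>conditions on \<omega>\<close>
     (\<forall>c x. \<omega> (s c x) = s (c^2) (\<omega> x)) \<and>
     (\<forall>x y. \<omega> (x + y) = \<omega> x + \<omega> y + \<phi> x y) \<and>
     (\<forall>x y. \<omega> (x * y) = x * x * \<omega> y + y * y * \<omega> x + x * y * \<phi> x y)"

definition C3_PA ::
  "('k::field \<Rightarrow> 'a::comm_ring \<Rightarrow> 'a) \<Rightarrow> ('a \<Rightarrow> 'a \<Rightarrow> 'a \<Rightarrow> 'a) \<Rightarrow> ('a \<Rightarrow> 'a \<Rightarrow> 'a) \<Rightarrow> bool" where
  "C3_PA s \<phi> \<omega> \<longleftrightarrow>
     \<comment> \<open>\<phi> \<in> X^3(A): alternating, multilinear, derivation in each argument\<close>
     (\<forall>c x y u v. \<phi> (s c x + y) u v = s c (\<phi> x u v) + \<phi> y u v) \<and>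
     (\<forall>c x y u v. \<phi> u (s c x + y) v = s c (\<phi> u x v) + \<phi> u y v) \<and>
     (\<forall>c x y u v. \<phi> u v (s c x + y) = s c (\<phi> u v x) + \<phi> u v y) \<and>
     (\<forall>x y. \<phi> x x y = 0) \<and> (\<forall>x y. \<phi> x y x = 0) \<and> (\<forall>x y. \<phi> y x x = 0) \<and>
     (\<forall>a b u v. \<phi> (a * b) u v = a * \<phi> b u v + b * \<phi> a u v) \<and>
     (\<forall>a b u v. \<phi> u (a * b) v = a * \<phi> u b v + b * \<phi> u a v) \<and>
     (\<forall>a b u v. \<phi> u v (a * b) = a * \<phi> u v b + b * \<phi> u v a) \<and>
     \<comment> \<open>conditions on \<omega> : A \<times> A \<rightarrow> A (linear in the last argument)\<close>
     (\<forall>x c z z'. \<omega> x (s c z + z') = s c (\<omega> x z) + \<omega> x z') \<and>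
     (\<forall>c x z. \<omega> (s c x) z = s (c^2) (\<omega> x z)) \<and>
     (\<forall>x y z. \<omega> (x + y) z = \<omega> x z + \<omega> y z + \<phi> x y z) \<and>
     (\<forall>x y z. \<omega> (x * y) z = x * x * \<omega> y z + y * y * \<omega> x z + x * y * \<phi> x y z) \<and>
     (\<forall>x z z'. \<omega> x (z * z') = z * \<omega> x z' + z' * \<omega> x z)"

text \<open>An element of K^t_k = K[t]/(t^(k+1)) (resp. A^t_k = A \<otimes> K^t_k) is represented
by its coefficient sequence, vanishing beyond degree k.\<close>

definition Kt :: "nat \<Rightarrow> (nat \<Rightarrow> 'k::field) set" where
  "Kt k = {c. \<forall>n>k. c n = 0}"

definition At :: "nat \<Rightarrow> (nat \<Rightarrow> 'a::comm_ring) set" where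
  "At k = {X. \<forall>n>k. X n = 0}"

definition Kt_mult :: "nat \<Rightarrow> (nat \<Rightarrow> 'k::field) \<Rightarrow> (nat \<Rightarrow> 'k) \<Rightarrow> nat \<Rightarrow> 'k" where
  "Kt_mult k a b = (\<lambda>n. if n \<le> k then (\<Sum>j\<le>n. a j * b (n - j)) else 0)"

definition At_add :: "(nat \<Rightarrow> 'a::comm_ring) \<Rightarrow> (nat \<Rightarrow> 'a) \<Rightarrow> nat \<Rightarrow> 'a" where
  "At_add X Y = (\<lambda>n. X n + Y n)"

definition At_scale ::
  "('k::field \<Rightarrow> 'a::comm_ring \<Rightarrow> 'a) \<Rightarrow> nat \<Rightarrow> (nat \<Rightarrow> 'k) \<Rightarrow> (nat \<Rightarrow> 'a) \<Rightarrow> nat \<Rightarrow> 'a" where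
  "At_scale s k c X = (\<lambda>n. if n \<le> k then (\<Sum>j\<le>n. s (c j) (X (n - j))) else 0)"

definition coef_mu :: "('a \<Rightarrow> 'a \<Rightarrow> 'a) \<Rightarrow> (nat \<Rightarrow> 'a \<Rightarrow> 'a \<Rightarrow> 'a) \<Rightarrow> nat \<Rightarrow> 'a \<Rightarrow> 'a \<Rightarrow> 'a" where
  "coef_mu br mu i = (if i = 0 then br else mu i)"

definition coef_om :: "('a \<Rightarrow> 'a) \<Rightarrow> (nat \<Rightarrow> 'a \<Rightarrow> 'a) \<Rightarrow> nat \<Rightarrow> 'a \<Rightarrow> 'a" where
  "coef_om sq om i = (if i = 0 then sq else om i)"

text \<open>mu_(k) = br + sum_(i=1..k) t^i mu_i, extended K^t_k-bilinearly to A^t_k.\<close>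

definition mu_k ::
  "('a::comm_ring \<Rightarrow> 'a \<Rightarrow> 'a) \<Rightarrow> (nat \<Rightarrow> 'a \<Rightarrow> 'a \<Rightarrow> 'a) \<Rightarrow> nat \<Rightarrow>
   (nat \<Rightarrow> 'a) \<Rightarrow> (nat \<Rightarrow> 'a) \<Rightarrow> nat \<Rightarrow> 'a" where
  "mu_k br mu k X Y = (\<lambda>n. if n \<le> k then
      (\<Sum>i\<le>n. \<Sum>j\<le>n - i. coef_mu br mu i (X j) (Y (n - i - j))) else 0)"

text \<open>omega_(k) = sq + sum_(i=1..k) t^i omega_i on A, extended to A^t_k by
omega(lambda X) = lambda^2 omega(X), omega(X+Y) = omega(X)+omega(Y)+mu(X,Y); explicitly
omega(sum_j t^j x_j) = sum_j t^(2j) omega(x_j) + sum_(j<l) t^(j+l) mu(x_j,x_l).\<close>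

definition om_k ::
  "('a::comm_ring \<Rightarrow> 'a \<Rightarrow> 'a) \<Rightarrow> ('a \<Rightarrow> 'a) \<Rightarrow> (nat \<Rightarrow> 'a \<Rightarrow> 'a \<Rightarrow> 'a) \<Rightarrow> (nat \<Rightarrow> 'a \<Rightarrow> 'a) \<Rightarrow> nat \<Rightarrow>
   (nat \<Rightarrow> 'a) \<Rightarrow> nat \<Rightarrow> 'a" where
  "om_k br sq mu om k X = (\<lambda>n. if n \<le> k then
      (\<Sum>i\<le>n. \<Sum>j\<le>n. if i + 2 * j = n then coef_om sq om i (X j) else 0)
    + (\<Sum>i\<le>n. \<Sum>j\<le>n. \<Sum>l\<le>n. if i + j + l = n \<and> j < l then coef_mu br mu i (X j) (X l) else 0)
    else 0)"

definition restricted_Lie_Atk ::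
  "('k::field \<Rightarrow> 'a::comm_ring \<Rightarrow> 'a) \<Rightarrow> nat \<Rightarrow> ((nat \<Rightarrow> 'a) \<Rightarrow> (nat \<Rightarrow> 'a) \<Rightarrow> nat \<Rightarrow> 'a) \<Rightarrow>
   ((nat \<Rightarrow> 'a) \<Rightarrow> nat \<Rightarrow> 'a) \<Rightarrow> bool" where
  "restricted_Lie_Atk s k M W \<longleftrightarrow>
     (\<forall>c\<in>Kt k. \<forall>X\<in>At k. \<forall>Y\<in>At k. \<forall>Z\<in>At k.
        M (At_add (At_scale s k c X) Y) Z = At_add (At_scale s k c (M X Z)) (M Y Z) \<and>
        M Z (At_add (At_scale s k c X) Y) = At_add (At_scale s k c (M Z X)) (M Z Y)) \<and>
     (\<forall>X\<in>At k. M X X = (\<lambda>_. 0)) \<and>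
     (\<forall>X\<in>At k. \<forall>Y\<in>At k. \<forall>Z\<in>At k.
        At_add (At_add (M X (M Y Z)) (M Y (M Z X))) (M Z (M X Y)) = (\<lambda>_. 0)) \<and>
     (\<forall>c\<in>Kt k. \<forall>X\<in>At k. W (At_scale s k c X) = At_scale s k (Kt_mult k c c) (W X)) \<and>
     (\<forall>X\<in>At k. \<forall>Y\<in>At k. W (At_add X Y) = At_add (At_add (W X) (W Y)) (M X Y)) \<and>
     (\<forall>X\<in>At k. \<forall>Y\<in>At k. M (W X) Y = M X (M X Y))"

definition formal_deformation ::
  "('k::field \<Rightarrow> 'a::comm_ring \<Rightarrow> 'a) \<Rightarrow> ('a \<Rightarrow> 'a \<Rightarrow> 'a) \<Rightarrow> ('a \<Rightarrow> 'a) \<Rightarrow> nat \<Rightarrow>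
   (nat \<Rightarrow> 'a \<Rightarrow> 'a \<Rightarrow> 'a) \<Rightarrow> (nat \<Rightarrow> 'a \<Rightarrow> 'a) \<Rightarrow> bool" where
  "formal_deformation s br sq k mu om \<longleftrightarrow>
     (\<forall>i\<in>{1..k}. C2_PA s (mu i) (om i)) \<and>
     restricted_Lie_Atk s k (mu_k br mu k) (om_k br sq mu om k)"

definition obs1 :: "(nat \<Rightarrow> 'a::comm_ring \<Rightarrow> 'a \<Rightarrow> 'a) \<Rightarrow> nat \<Rightarrow> 'a \<Rightarrow> 'a \<Rightarrow> 'a \<Rightarrow> 'a" where
  "obs1 mu k x y z = (\<Sum>i\<in>{1..k}.
      mu i x (mu (k + 1 - i) y z) + mu i y (mu (k + 1 - i) z x) + mu i z (mu (k + 1 - i) x y))"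

definition obs2 :: "(nat \<Rightarrow> 'a::comm_ring \<Rightarrow> 'a \<Rightarrow> 'a) \<Rightarrow> (nat \<Rightarrow> 'a \<Rightarrow> 'a) \<Rightarrow> nat \<Rightarrow> 'a \<Rightarrow> 'a \<Rightarrow> 'a" where
  "obs2 mu om k x y = (\<Sum>i\<in>{1..k}. mu i y (om (k + 1 - i) x) + mu i x (mu (k + 1 - i) x y))"

end

theory Submission
  imports Defs
begin

locale obsctx = vector_space s for s :: "'k::field \<Rightarrow> 'a::comm_ring \<Rightarrow> 'a" +
  fixes mu :: "nat \<Rightarrow> 'a \<Rightarrow> 'a \<Rightarrow> 'a" and om :: "nat \<Rightarrow> 'a \<Rightarrow> 'a" and k :: nat
  assumes C2: "i \<in> {1..k} \<Longrightarrow> C2_PA s (mu i) (om i)"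
    and ch2: "(x::'a) + x = 0"
begin

lemma ch2': "(x::'a) + (x + y) = y"
  by (metis add.assoc ch2 add_0)

lemma negid: "- (x::'a) = x"
  using ch2 neg_eq_iff_add_eq_0 by blast

context fixes i assumes i1: "Suc 0 \<le> i" and i2: "i \<le> k"
begin
lemma iin: "i \<in> {1..k}" using i1 i2 by simp

lemma lin1: "mu i (s c x + y) z = s c (mu i x z) + mu i y z"
  using C2[OF iin] unfolding C2_PA_def by auto
lemma lin2: "mu i z (s c x + y) = s c (mu i z x) + mu i z y"
  using C2[OF iin] unfolding C2_PA_def by blast
lemma add1: "mu i (x + y) z = mu i x z + mu i y z"
  using lin1[of 1] by simp
lemma add2: "mu i z (x + y) = mu i z x + mu i z y"
  using lin2[of _ 1] by simp
lemma zero1: "mu i 0 z = 0"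
  using add1[of 0 0 z] by simp
lemma zero2: "mu i z 0 = 0"
  using add2[of z 0 0] by simp
lemma sc1: "mu i (s c x) z = s c (mu i x z)"
  using lin1[of c x 0 z] by (simp add: zero1)
lemma sc2: "mu i z (s c x) = s c (mu i z x)"
  using lin2[of z c x 0] by (simp add: zero2)
lemma alt: "mu i x x = 0"
  using C2[OF iin] unfolding C2_PA_def by blast
lemma sym: "mu i y x = mu i x y"
proof -
  have "mu i x x + mu i y x + (mu i x y + mu i y y) = 0" using alt[of "x+y"] by (simp only: add1 add2)
  hence "mu i x y + mu i y x = 0" by (simp add: alt add.commute)
  hence "mu i y x = - mu i x y" by (metis neg_eq_iff_add_eq_0)
  thus ?thesis by (simp add: negid)
qed
lemma der1: "mu i (a * b) c = a * mu i b c + b * mu i a c"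
  using C2[OF iin] unfolding C2_PA_def by blast
lemma der2: "mu i c (a * b) = a * mu i c b + b * mu i c a"
  using C2[OF iin] unfolding C2_PA_def by blast
lemma omsc: "om i (s c x) = s (c^2) (om i x)"
  using C2[OF iin] unfolding C2_PA_def by blast
lemma omadd: "om i (x + y) = om i x + om i y + mu i x y"
  using C2[OF iin] unfolding C2_PA_def by blast
lemma ommul: "om i (x * y) = x * x * om i y + y * y * om i x + x * y * mu i x y"
  using C2[OF iin] unfolding C2_PA_def by blast
lemmas Li = lin1 lin2 add1 add2 zero1 zero2 sc1 sc2 alt sym der1 der2 omsc omadd ommul
end

lemma jfacts: "i \<in> {1..k} \<Longrightarrow> Suc 0 \<le> i \<and> i \<le> k \<and> Suc 0 \<le> Suc k - i \<and> Suc k - i \<le> k \<and> Suc k - (Suc k - i) = i" by auto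
lemma revk: "i \<in> {1..k} \<Longrightarrow> k + 1 - i \<in> {1..k}" by auto
lemma revk2: "i \<in> {1..k} \<Longrightarrow> k + 1 - (k + 1 - i) = i" by auto

lemma cancel_sum:
  fixes T R :: "nat \<Rightarrow> 'a" and G :: "nat \<Rightarrow> nat \<Rightarrow> 'a"
  assumes "\<And>i. i \<in> {1..k} \<Longrightarrow> T i = R i + (G i (k+1-i) + G (k+1-i) i)"
  shows "(\<Sum>i\<in>{1..k}. T i) = (\<Sum>i\<in>{1..k}. R i)"
proof -
  have "(\<Sum>i\<in>{1..k}. T i) = (\<Sum>i\<in>{1..k}. R i + (G i (k+1-i) + G (k+1-i) i))"
    by (rule sum.cong) (rule refl, rule assms)
  also have "\<dots> = (\<Sum>i\<in>{1..k}. R i) + ((\<Sum>i\<in>{1..k}. G i (k+1-i)) + (\<Sum>i\<in>{1..k}. G (k+1-i) i))"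
    by (simp only: sum.distrib)
  also have "(\<Sum>i\<in>{1..k}. G (k+1-i) i) = (\<Sum>i\<in>{1..k}. G (k+1-(k+1-i)) (k+1-i))"
    by (rule sum.atLeastAtMost_rev)
  also have "\<dots> = (\<Sum>i\<in>{1..k}. G i (k+1-i))"
    by (rule sum.cong) (rule refl, simp add: revk2)
  also have "(\<Sum>i\<in>{1..k}. G i (k+1-i)) + (\<Sum>i\<in>{1..k}. G i (k+1-i)) = 0"
    by (rule ch2)
  finally show ?thesis by simp
qed


lemma obs1_swap: "obs1 mu k y x z = obs1 mu k x y z"
  unfolding obs1_def
  apply (intro sum.cong refl)
  subgoal premises p for i
  proof -
    from p have a: "Suc 0 \<le> i" "i \<le> k" "Suc 0 \<le> k + 1 - i" "k + 1 - i \<le> k" "k + 1 - (k + 1 - i) = i" by auto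
    show ?thesis
      by ((simp only: Li[OF a(1,2)] Li[OF a(3,4)] a(5))?; (simp add: sym[OF a(1,2)] sym[OF a(3,4)] alt[OF a(1,2)] alt[OF a(3,4)] add_ac ch2 ch2' algebra_simps)?)
  qed
  done

lemma obs1_cyc: "obs1 mu k y z x = obs1 mu k x y z"
  unfolding obs1_def
  apply (intro sum.cong refl)
  subgoal premises p for i
  proof -
    from p have a: "Suc 0 \<le> i" "i \<le> k" "Suc 0 \<le> k + 1 - i" "k + 1 - i \<le> k" "k + 1 - (k + 1 - i) = i" by auto
    show ?thesis
      by ((simp only: Li[OF a(1,2)] Li[OF a(3,4)] a(5))?; (simp add: sym[OF a(1,2)] sym[OF a(3,4)] alt[OF a(1,2)] alt[OF a(3,4)] add_ac ch2 ch2' algebra_simps)?)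
  qed
  done

lemma obs1_lin: "obs1 mu k (s c x + y) u v = s c (obs1 mu k x u v) + obs1 mu k y u v"
  unfolding obs1_def scale_sum_right sum.distrib[symmetric]
  apply (intro sum.cong refl)
  subgoal premises p for i
  proof -
    from p have a: "Suc 0 \<le> i" "i \<le> k" "Suc 0 \<le> k + 1 - i" "k + 1 - i \<le> k" "k + 1 - (k + 1 - i) = i" by auto
    show ?thesis
      by ((simp only: Li[OF a(1,2)] Li[OF a(3,4)] a(5))?; (simp add: sym[OF a(1,2)] sym[OF a(3,4)] alt[OF a(1,2)] alt[OF a(3,4)] scale_right_distrib add_ac ch2 ch2' algebra_simps)?)
  qed
  done

lemma obs1_alt: "obs1 mu k x x y = 0"
  unfolding obs1_def
  apply (intro sum.neutral ballI)
  subgoal premises p for i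
  proof -
    from p have a: "Suc 0 \<le> i" "i \<le> k" "Suc 0 \<le> k + 1 - i" "k + 1 - i \<le> k" "k + 1 - (k + 1 - i) = i" by auto
    show ?thesis
      by ((simp only: Li[OF a(1,2)] Li[OF a(3,4)] a(5))?; (simp add: sym[OF a(1,2)] sym[OF a(3,4)] alt[OF a(1,2)] alt[OF a(3,4)] ch2 ch2 ch2' algebra_simps)?)
  qed
  done

lemma obs1_der: "obs1 mu k (a*b) u v = a * obs1 mu k b u v + b * obs1 mu k a u v"
  unfolding obs1_def sum_distrib_left sum.distrib[symmetric]
  apply (rule cancel_sum[where G = "\<lambda>i j. mu j v b * mu i u a + mu j v a * mu i u b"])
  subgoal premises p for i
  proof -
    from p have a: "Suc 0 \<le> i" "i \<le> k" "Suc 0 \<le> k + 1 - i" "k + 1 - i \<le> k" "k + 1 - (k + 1 - i) = i" by auto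
    show ?thesis
      by ((simp only: Li[OF a(1,2)] Li[OF a(3,4)] a(5) add.assoc[symmetric])?; (simp add: sym[OF a(1,2)] sym[OF a(3,4)] algebra_simps ch2 ch2')?)
  qed
  done

lemma obs2_lin: "obs2 mu om k x (s c z + z') = s c (obs2 mu om k x z) + obs2 mu om k x z'"
  unfolding obs2_def scale_sum_right sum.distrib[symmetric]
  apply (intro sum.cong refl)
  subgoal premises p for i
  proof -
    from p have a: "Suc 0 \<le> i" "i \<le> k" "Suc 0 \<le> k + 1 - i" "k + 1 - i \<le> k" "k + 1 - (k + 1 - i) = i" by auto
    show ?thesis
      by ((simp only: Li[OF a(1,2)] Li[OF a(3,4)] a(5))?; (simp add: sym[OF a(1,2)] sym[OF a(3,4)] alt[OF a(1,2)] alt[OF a(3,4)] scale_right_distrib add_ac ch2 ch2' algebra_simps)?)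
  qed
  done

lemma obs2_sc: "obs2 mu om k (s c x) z = s (c^2) (obs2 mu om k x z)"
  unfolding obs2_def scale_sum_right
  apply (intro sum.cong refl)
  subgoal premises p for i
  proof -
    from p have a: "Suc 0 \<le> i" "i \<le> k" "Suc 0 \<le> k + 1 - i" "k + 1 - i \<le> k" "k + 1 - (k + 1 - i) = i" by auto
    show ?thesis
      by ((simp only: Li[OF a(1,2)] Li[OF a(3,4)] a(5))?; (simp add: sym[OF a(1,2)] sym[OF a(3,4)] alt[OF a(1,2)] alt[OF a(3,4)] scale_right_distrib power2_eq_square ch2 ch2' algebra_simps)?)
  qed
  done

lemma obs2_add: "obs2 mu om k (x + y) z = obs2 mu om k x z + obs2 mu om k y z + obs1 mu k x y z"
  unfolding obs2_def obs1_def sum.distrib[symmetric]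
  apply (intro sum.cong refl)
  subgoal premises p for i
  proof -
    from p have a: "Suc 0 \<le> i" "i \<le> k" "Suc 0 \<le> k + 1 - i" "k + 1 - i \<le> k" "k + 1 - (k + 1 - i) = i" by auto
    show ?thesis
      by ((simp only: Li[OF a(1,2)] Li[OF a(3,4)] a(5))?; (simp add: sym[OF a(1,2)] sym[OF a(3,4)] alt[OF a(1,2)] alt[OF a(3,4)] add_ac ch2 ch2' algebra_simps)?)
  qed
  done

lemma obs2_mul: "obs2 mu om k (x * y) z = x * x * obs2 mu om k y z + y * y * obs2 mu om k x z + x * y * obs1 mu k x y z"
  unfolding obs2_def obs1_def sum_distrib_left sum.distrib[symmetric]
  apply (rule cancel_sum[where G = "\<lambda>i j. x * mu j x y * mu i z y + y * mu j x y * mu i z x"])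
  subgoal premises p for i
  proof -
    from p have a: "Suc 0 \<le> i" "i \<le> k" "Suc 0 \<le> k + 1 - i" "k + 1 - i \<le> k" "k + 1 - (k + 1 - i) = i" by auto
    show ?thesis
      by ((simp only: Li[OF a(1,2)] Li[OF a(3,4)] a(5) add.assoc[symmetric])?; (simp add: sym[OF a(1,2)] sym[OF a(3,4)] algebra_simps ch2 ch2')?)
  qed
  done

lemma obs2_der: "obs2 mu om k x (z * z') = z * obs2 mu om k x z' + z' * obs2 mu om k x z"
  unfolding obs2_def sum_distrib_left sum.distrib[symmetric]
  apply (rule cancel_sum[where G = "\<lambda>i j. mu j x z' * mu i x z"])
  subgoal premises p for i
  proof -
    from p have a: "Suc 0 \<le> i" "i \<le> k" "Suc 0 \<le> k + 1 - i" "k + 1 - i \<le> k" "k + 1 - (k + 1 - i) = i" by auto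
    show ?thesis
      by ((simp only: Li[OF a(1,2)] Li[OF a(3,4)] a(5) add.assoc[symmetric])?; (simp add: sym[OF a(1,2)] sym[OF a(3,4)] algebra_simps ch2 ch2')?)
  qed
  done

lemma C3: "C3_PA s (obs1 mu k) (obs2 mu om k)"
proof -
  have l2: "obs1 mu k u (s c x + y) v = s c (obs1 mu k u x v) + obs1 mu k u y v" for u c x y v
    using obs1_lin[of c x y u v] obs1_swap[of u "s c x + y" v] obs1_swap[of u x v] obs1_swap[of u y v] by simp
  have l3: "obs1 mu k u v (s c x + y) = s c (obs1 mu k u v x) + obs1 mu k u v y" for u c x y v
    using obs1_lin[of c x y u v] obs1_cyc[of u v "s c x + y"] obs1_cyc[of u v x] obs1_cyc[of u v y] by simp
  have a2: "obs1 mu k x y x = 0" for x y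
    using obs1_alt[of x y] obs1_cyc[of x y x] by simp
  have a3: "obs1 mu k y x x = 0" for x y
    using obs1_alt[of x y] obs1_cyc[of x x y] by simp
  have d2: "obs1 mu k u (a * b) v = a * obs1 mu k u b v + b * obs1 mu k u a v" for a b u v
    using obs1_der[of a b u v] obs1_swap[of u "a * b" v] obs1_swap[of u a v] obs1_swap[of u b v] by simp
  have d3: "obs1 mu k u v (a * b) = a * obs1 mu k u v b + b * obs1 mu k u v a" for a b u v
    using obs1_der[of a b u v] obs1_cyc[of u v "a * b"] obs1_cyc[of u v a] obs1_cyc[of u v b] by simp
  show ?thesis
    unfolding C3_PA_def
    by (intro conjI allI; simp only: obs1_lin l2 l3 obs1_alt a2 a3 obs1_der d2 d3 obs2_lin obs2_sc obs2_add obs2_mul obs2_der)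
qed

end

theorem mainTheorem17:
  fixes s :: "'k::field \<Rightarrow> 'a::comm_ring \<Rightarrow> 'a"
    and br :: "'a \<Rightarrow> 'a \<Rightarrow> 'a" and sq :: "'a \<Rightarrow> 'a"
    and k :: nat and mu :: "nat \<Rightarrow> 'a \<Rightarrow> 'a \<Rightarrow> 'a" and om :: "nat \<Rightarrow> 'a \<Rightarrow> 'a"
  assumes "CHAR('k) = 2"
    and "restricted_poisson s br sq"
    and "k \<ge> 1"
    and "formal_deformation s br sq k mu om"
  shows "C3_PA s (obs1 mu k) (obs2 mu om k)"
proof -
  have vs: "vector_space s"
    using assms(2) unfolding restricted_poisson_def comm_algebra_def by blast
  interpret V: vector_space s by (rule vs)
  have two: "(1 + 1 :: 'k) = 0"
    using of_nat_CHAR[where 'a='k] assms(1) by simp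
  have ch: "x + x = 0" for x :: 'a
  proof -
    have "x + x = s 1 x + s 1 x" by simp
    also have "\<dots> = s (1 + 1) x" by (simp only: V.scale_left_distrib)
    also have "\<dots> = 0" by (simp only: two V.scale_zero_left)
    finally show ?thesis .
  qed
  have c2: "C2_PA s (mu i) (om i)" if "i \<in> {1..k}" for i
    using assms(4) that unfolding formal_deformation_def by blast
  interpret O: obsctx s mu om k
    by (unfold_locales; (rule c2 ch)?)
  show ?thesis by (rule O.C3)
qed

end
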